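(* Let $W$ be a periodic infinite word with a period of length $N$ (i.e. $W=uuu\cdots$ with $|u|=N$). Then every Rauzy scheme for $W$ has scale strictly less than $N$.
   Context: $u\sqsubseteq w$: $u$ is a factor of $w$; $u\sqsubseteq_k w$: $u$ occurs in $w$ at least $k$ times. A graph with words is a strongly connected finite directed graph (multiple edges and loops allowed) in which every edge $e$ carries a front word $F(e)$ and a back word $B(e)$, and every vertex either has in-degree $1$ and out-degree $>1$ (distributing vertex) or in-degree $>1$ and out-degree $1$ (collecting vertex). A path is a finite nonempty sequence of edges $v_1\dots v_n$ with each $v_{i+1}$ starting where $v_i$ ends; subpaths and $s_1\sqsubseteq_k s_2$ are defined via edge records. A path is symmetric if its first edge starts at a collecting vertex and its last edge ends at a distributing vertex. For $s=v_1\dots v_n$, $F(s)$ is the concatenation, in order, of the front words of $v_1$ and of all $v_i$ ($i\ge2$) starting at a distributing vertex; $B(s)$ is the concatenation, in order, of the back words of all $v_i$ ($i\le n-1$) ending at a collecting vertex and of $v_n$. A Rauzy scheme for $W$ is a graph with words such that: (1) it has more than one edge; (2) front words of edges leaving a common distributing vertex have pairwise distinct first letters, and back words of edges entering a common collecting vertex have pairwise distinct last letters; (3) $F(s)=B(s)$ for every symmetric path $s$; (4) for symmetric paths $s_1,s_2$ and $k\ge1$, $F(s_1)\sqsubseteq_k F(s_2)$ implies $s_1\sqsubseteq_k s_2$; (5) all words on edges are factors of $W$; (6) every factor of $W$ is a factor of $F(s)$ for some symmetric path $s$; (7) for every edge $e$ there is a factor $u_e$ of $W$ such that every symmetric path $s$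 with $u_e\sqsubseteq F(s)$ passes through $e$. A support edge is an edge from a collecting vertex to a distributing vertex; the scale of $S$ is the minimum of $|F(v)|$ over support edges $v$. *)

theory Defs
  imports "HOL-Library.Sublist"
begin

definition factor_of_inf :: "'a list \<Rightarrow> (nat \<Rightarrow> 'a) \<Rightarrow> bool" where
  "factor_of_inf u W \<longleftrightarrow> (\<exists>i. u = map W [i..<i + length u])"

definition occ :: "'b list \<Rightarrow> 'b list \<Rightarrow> nat" where
  "occ u w = card {i. i + length u \<le> length w \<and> take (length u) (drop i w) = u}"

definition occurs_k :: "'b list \<Rightarrow> nat \<Rightarrow> 'b list \<Rightarrow> bool" where
  "occurs_k u k w \<longleftrightarrow> occ u w \<ge> k"

definition periodic_with :: "(nat \<Rightarrow> 'a) \<Rightarrow> nat \<Rightarrow> bool" where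
  "periodic_with W N \<longleftrightarrow> N > 0 \<and> (\<forall>i. W (i + N) = W i)"

definition indeg :: "'v set \<Rightarrow> 'e set \<Rightarrow> ('e \<Rightarrow> 'v) \<Rightarrow> ('e \<Rightarrow> 'v) \<Rightarrow> 'v \<Rightarrow> nat" where
  "indeg V E src tgt v = card {e\<in>E. tgt e = v}"

definition outdeg :: "'v set \<Rightarrow> 'e set \<Rightarrow> ('e \<Rightarrow> 'v) \<Rightarrow> ('e \<Rightarrow> 'v) \<Rightarrow> 'v \<Rightarrow> nat" where
  "outdeg V E src tgt v = card {e\<in>E. src e = v}"

definition distributing where
  "distributing V E src tgt v \<longleftrightarrow> indeg V E src tgt v = 1 \<and> outdeg V E src tgt v > 1"

definition collecting where
  "collecting V E src tgt v \<longleftrightarrow> indeg V E src tgt v > 1 \<and> outdeg V E src tgt v = 1"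

definition is_path :: "'e set \<Rightarrow> ('e \<Rightarrow> 'v) \<Rightarrow> ('e \<Rightarrow> 'v) \<Rightarrow> 'e list \<Rightarrow> bool" where
  "is_path E src tgt p \<longleftrightarrow> p \<noteq> [] \<and> set p \<subseteq> E \<and>
     (\<forall>i. i + 1 < length p \<longrightarrow> tgt (p ! i) = src (p ! (i + 1)))"

definition strongly_connected :: "'v set \<Rightarrow> 'e set \<Rightarrow> ('e \<Rightarrow> 'v) \<Rightarrow> ('e \<Rightarrow> 'v) \<Rightarrow> bool" where
  "strongly_connected V E src tgt \<longleftrightarrow>
     (\<forall>u\<in>V. \<forall>v\<in>V. u = v \<or>
        (\<exists>p. is_path E src tgt p \<and> src (hd p) = u \<and> tgt (last p) = v))"

definition graph_with_words ::
  "'v set \<Rightarrow> 'e set \<Rightarrow> ('e \<Rightarrow> 'v) \<Rightarrow> ('e \<Rightarrow> 'v) \<Rightarrow> bool" where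
  "graph_with_words V E src tgt \<longleftrightarrow>
     finite V \<and> finite E \<and> (\<forall>e\<in>E. src e \<in> V \<and> tgt e \<in> V) \<and>
     strongly_connected V E src tgt \<and>
     (\<forall>v\<in>V. distributing V E src tgt v \<or> collecting V E src tgt v)"

definition symmetric_path where
  "symmetric_path V E src tgt p \<longleftrightarrow> is_path E src tgt p \<and>
     collecting V E src tgt (src (hd p)) \<and> distributing V E src tgt (tgt (last p))"

definition Fpath where
  "Fpath V E src tgt F p = F (hd p) @
     concat (map F (filter (\<lambda>e. distributing V E src tgt (src e)) (tl p)))"

definition Bpath where
  "Bpath V E src tgt B p =
     concat (map B (filter (\<lambda>e. collecting V E src tgt (tgt e)) (butlast p))) @ B (last p)"

definition rauzy_scheme ::
  "(nat \<Rightarrow> 'a) \<Rightarrow> 'v set \<Rightarrow> 'e set \<Rightarrow> ('e \<Rightarrow> 'v) \<Rightarrow> ('e \<Rightarrow> 'v) \<Rightarrow>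
   ('e \<Rightarrow> 'a list) \<Rightarrow> ('e \<Rightarrow> 'a list) \<Rightarrow> bool" where
  "rauzy_scheme W V E src tgt F B \<longleftrightarrow>
     graph_with_words V E src tgt \<and>
     \<comment> \<open>(1)\<close>
     card E > 1 \<and>
     \<comment> \<open>(2)\<close>
     (\<forall>v\<in>V. distributing V E src tgt v \<longrightarrow>
        (\<forall>e1\<in>E. \<forall>e2\<in>E. src e1 = v \<and> src e2 = v \<and> e1 \<noteq> e2 \<longrightarrow>
           F e1 \<noteq> [] \<and> F e2 \<noteq> [] \<and> hd (F e1) \<noteq> hd (F e2))) \<and>
     (\<forall>v\<in>V. collecting V E src tgt v \<longrightarrow>
        (\<forall>e1\<in>E. \<forall>e2\<in>E. tgt e1 = v \<and> tgt e2 = v \<and> e1 \<noteq> e2 \<longrightarrow>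
           B e1 \<noteq> [] \<and> B e2 \<noteq> [] \<and> last (B e1) \<noteq> last (B e2))) \<and>
     \<comment> \<open>(3)\<close>
     (\<forall>s. symmetric_path V E src tgt s \<longrightarrow> Fpath V E src tgt F s = Bpath V E src tgt B s) \<and>
     \<comment> \<open>(4)\<close>
     (\<forall>s1 s2 k. symmetric_path V E src tgt s1 \<and> symmetric_path V E src tgt s2 \<and> k \<ge> 1 \<and>
        occurs_k (Fpath V E src tgt F s1) k (Fpath V E src tgt F s2) \<longrightarrow> occurs_k s1 k s2) \<and>
     \<comment> \<open>(5)\<close>
     (\<forall>e\<in>E. factor_of_inf (F e) W \<and> factor_of_inf (B e) W) \<and>
     \<comment> \<open>(6)\<close>
     (\<forall>u. factor_of_inf u W \<longrightarrow>
        (\<exists>s. symmetric_path V E src tgt s \<and> sublist u (Fpath V E src tgt F s))) \<and>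
     \<comment> \<open>(7)\<close>
     (\<forall>e\<in>E. \<exists>u. factor_of_inf u W \<and>
        (\<forall>s. symmetric_path V E src tgt s \<and> sublist u (Fpath V E src tgt F s) \<longrightarrow> e \<in> set s))"

definition support_edge where
  "support_edge V E src tgt e \<longleftrightarrow> e \<in> E \<and>
     collecting V E src tgt (src e) \<and> distributing V E src tgt (tgt e)"

definition scale where
  "scale V E src tgt F = Min {length (F e) | e. support_edge V E src tgt e}"

end

theory Submission
  imports Defs
begin

lemma per_mult: "periodic_with W N \<Longrightarrow> W (a + q * N) = W a"
proof (induction q)
  case (Suc q)
  have "a + Suc q * N = (a + q * N) + N" by simp
  then show ?case using Suc unfolding periodic_with_def by metis
qed simp

lemma per_mod: "periodic_with W N \<Longrightarrow> W a = W (a mod N)"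
  using per_mult[of W N "a mod N" "a div N"] by (simp add: add.commute)

lemma per_cong: "periodic_with W N \<Longrightarrow> a mod N = b mod N \<Longrightarrow> W a = W b"
  using per_mod by metis

lemma mod_rep: "0 < (N::nat) \<Longrightarrow> \<exists>k'. j \<le> k' \<and> k' < j + N \<and> k' mod N = k mod N"
proof -
  assume N: "0 < N"
  define r where "r = (k mod N + N - j mod N) mod N"
  have "r < N" using N by (simp add: r_def)
  moreover have "(j + r) mod N = k mod N"
  proof -
    have "(j + r) mod N = (j + (k mod N + N - j mod N)) mod N"
      unfolding r_def by (rule mod_add_right_eq)
    also have "\<dots> = (j mod N + (k mod N + N - j mod N)) mod N"
      by (rule mod_add_left_eq[symmetric])
    also have "j mod N + (k mod N + N - j mod N) = k mod N + N"
      using mod_less_divisor[OF N, of j] by simp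
    also have "(k mod N + N) mod N = k mod N" by simp
    finally show ?thesis .
  qed
  ultimately have "j \<le> j + r \<and> j + r < j + N \<and> (j + r) mod N = k mod N" by simp
  then show ?thesis by blast
qed

lemma fac_in_window:
  assumes per: "periodic_with W N" and u: "factor_of_inf u W" and l: "length u + N \<le> L"
  shows "sublist u (map W [j..<j+L])"
proof -
  have N: "0 < N" using per by (simp add: periodic_with_def)
  obtain k where uk0: "u = map W [k..<k + length u]" using u unfolding factor_of_inf_def by blast
  obtain n where n: "n = length u" by blast
  have uk: "u = map W [k..<k + n]" using uk0 n by metis
  obtain k' where k': "j \<le> k'" "k' < j + N" "k' mod N = k mod N" using mod_rep[OF N] by blast
  have "map W [k'..<k' + n] = map W [k..<k + n]"
  proof (rule nth_equalityI)
    fix i assume "i < length (map W [k'..<k' + n])"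
    then have i: "i < n" by simp
    have mm: "(k' + i) mod N = (k + i) mod N" using k'(3) by (metis mod_add_left_eq[of k' N i] mod_add_left_eq[of k N i])
    then show "map W [k'..<k' + n] ! i = map W [k..<k + n] ! i"
      using i per_cong[OF per mm] by simp
  qed simp
  then have ueq: "u = map W [k'..<k' + n]" using uk by simp
  have le1: "k' + n \<le> j + L" using k' l n by simp
  have "[j..<j+L] = [j..<k'] @ [k'..<j+L]"
    using upt_add_eq_append[of j k' "j + L - k'"] k'(1) le1 by simp
  moreover have "[k'..<j+L] = [k'..<k' + n] @ [k' + n..<j+L]"
    using upt_add_eq_append[of k' "k' + n" "j + L - (k' + n)"] le1 by simp
  ultimately have "map W [j..<j+L] = map W [j..<k'] @ u @ map W [k' + n..<j+L]" using ueq by simp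
  then show ?thesis by simp
qed

locale rsch =
  fixes W :: "nat \<Rightarrow> 'a" and V :: "'v set" and E :: "'e set" and src tgt :: "'e \<Rightarrow> 'v"
    and F B :: "'e \<Rightarrow> 'a list"
  assumes rs: "rauzy_scheme W V E src tgt F B"
begin

abbreviation "dist v \<equiv> distributing V E src tgt v"
abbreviation "coll v \<equiv> collecting V E src tgt v"
abbreviation "spath s \<equiv> symmetric_path V E src tgt s"
abbreviation "Fp s \<equiv> Fpath V E src tgt F s"
abbreviation "Bp s \<equiv> Bpath V E src tgt B s"
definition "Frest xs = concat (map F (filter (\<lambda>e. dist (src e)) xs))"
definition "Bc xs = concat (map B (filter (\<lambda>e. coll (tgt e)) xs))"

lemma Frest_simps[simp]: "Frest [] = []" "Frest (xs @ ys) = Frest xs @ Frest ys"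
  "Frest (a # xs) = (if dist (src a) then F a @ Frest xs else Frest xs)"
  by (auto simp: Frest_def)
lemma Bc_simps[simp]: "Bc [] = []" "Bc (xs @ ys) = Bc xs @ Bc ys"
  "Bc (a # xs) = (if coll (tgt a) then B a @ Bc xs else Bc xs)"
  by (auto simp: Bc_def)

lemma Fp_eq: "Fp s = F (hd s) @ Frest (tl s)" by (simp add: Fpath_def Frest_def)
lemma Bp_eq: "Bp s = Bc (butlast s) @ B (last s)" by (simp add: Bpath_def Bc_def)

lemma coll_not_dist: "coll v \<Longrightarrow> \<not> dist v"
  by (auto simp: collecting_def distributing_def)

lemma gww: "graph_with_words V E src tgt" using rs by (simp add: rauzy_scheme_def)
lemma finE: "finite E" using gww by (simp add: graph_with_words_def)
lemma inV: "e \<in> E \<Longrightarrow> src e \<in> V \<and> tgt e \<in> V" using gww by (simp add: graph_with_words_def)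
lemma DC: "v \<in> V \<Longrightarrow> dist v \<or> coll v" using gww by (simp add: graph_with_words_def)

lemma ax4': "\<forall>s1 s2 k. spath s1 \<and> spath s2 \<and> k \<ge> 1 \<and>
        occurs_k (Fp s1) k (Fp s2) \<longrightarrow> occurs_k s1 k s2"
  using rs unfolding rauzy_scheme_def by (elim conjE) assumption
lemma ax5': "\<forall>e\<in>E. factor_of_inf (F e) W \<and> factor_of_inf (B e) W"
  using rs unfolding rauzy_scheme_def by (elim conjE) assumption
lemma ax6': "\<forall>u. factor_of_inf u W \<longrightarrow> (\<exists>s. spath s \<and> sublist u (Fp s))"
  using rs unfolding rauzy_scheme_def by (elim conjE) assumption
lemma ax7: "\<forall>e\<in>E. \<exists>u. factor_of_inf u W \<and>
        (\<forall>s. spath s \<and> sublist u (Fp s) \<longrightarrow> e \<in> set s)"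
  using rs unfolding rauzy_scheme_def by (elim conjE) assumption
lemma ax3: "\<forall>s. spath s \<longrightarrow> Fp s = Bp s"
  using rs unfolding rauzy_scheme_def by (elim conjE) assumption

lemma ax4: "spath s1 \<Longrightarrow> spath s2 \<Longrightarrow> 1 \<le> k \<Longrightarrow> occurs_k (Fp s1) k (Fp s2) \<Longrightarrow> occurs_k s1 k s2"
  using ax4' by blast
lemma ax5: "e \<in> E \<Longrightarrow> factor_of_inf (F e) W"
  using ax5' by blast
lemma ax6: "factor_of_inf u W \<Longrightarrow> \<exists>s. spath s \<and> sublist u (Fp s)"
  using ax6' by blast

lemma path_nth: "is_path E src tgt t \<Longrightarrow> i < length t \<Longrightarrow> t ! i \<in> E"
  by (auto simp: is_path_def)
lemma path_link: "is_path E src tgt t \<Longrightarrow> Suc i < length t \<Longrightarrow> tgt (t ! i) = src (t ! Suc i)"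
  by (auto simp: is_path_def)
lemma path_take: "is_path E src tgt t \<Longrightarrow> 0 < n \<Longrightarrow> is_path E src tgt (take n t)"
  unfolding is_path_def by (auto dest: in_set_takeD)
lemma path_drop: "is_path E src tgt t \<Longrightarrow> n < length t \<Longrightarrow> is_path E src tgt (drop n t)"
proof -
  assume a: "is_path E src tgt t" "n < length t"
  have "drop n t \<noteq> []" using a(2) by simp
  moreover have "set (drop n t) \<subseteq> E" using a(1) set_drop_subset[of n t] by (auto simp: is_path_def)
  moreover have "\<forall>i. i + 1 < length (drop n t) \<longrightarrow> tgt (drop n t ! i) = src (drop n t ! (i + 1))"
  proof (intro allI impI)
    fix i assume "i + 1 < length (drop n t)"
    then have "n + i + 1 < length t" by simp
    then have "tgt (t ! (n + i)) = src (t ! (n + i + 1))" using a(1) unfolding is_path_def by blast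
    then show "tgt (drop n t ! i) = src (drop n t ! (i + 1))" using a(2) by (simp add: add.assoc)
  qed
  ultimately show ?thesis by (simp add: is_path_def)
qed

lemma sym_drop: "spath t \<Longrightarrow> i < length t \<Longrightarrow> coll (src (t ! i)) \<Longrightarrow> spath (drop i t)"
  unfolding symmetric_path_def using path_drop by (auto simp: hd_drop_conv_nth last_drop)

lemma sym_take: "spath t \<Longrightarrow> i < length t \<Longrightarrow> dist (tgt (t ! i)) \<Longrightarrow> spath (take (Suc i) t)"
proof -
  assume a: "spath t" "i < length t" "dist (tgt (t ! i))"
  have p: "is_path E src tgt (take (Suc i) t)" using a path_take by (auto simp: symmetric_path_def)
  have "last (take (Suc i) t) = t ! i" using a(2) by (simp add: take_Suc_conv_app_nth)
  moreover have "hd (take (Suc i) t) = hd t" using a(2) by (simp add: hd_take)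
  ultimately show ?thesis using a p by (simp add: symmetric_path_def)
qed

lemma indeg_unique: "v \<in> V \<Longrightarrow> dist v \<Longrightarrow> e \<in> E \<Longrightarrow> f \<in> E \<Longrightarrow> tgt e = v \<Longrightarrow> tgt f = v \<Longrightarrow> e = f"
proof -
  assume a: "v \<in> V" "dist v" "e \<in> E" "f \<in> E" "tgt e = v" "tgt f = v"
  then have "card {e\<in>E. tgt e = v} = 1" by (simp add: distributing_def indeg_def)
  then obtain z where "{e\<in>E. tgt e = v} = {z}" by (auto simp: card_Suc_eq)
  then have "e \<in> {z}" "f \<in> {z}" using a by (blast, blast)
  then show "e = f" by simp
qed

lemma other_in:
  assumes v: "coll v" and e: "e \<in> E" "tgt e = v"
  shows "\<exists>f\<in>E. tgt f = v \<and> f \<noteq> e"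
proof (rule ccontr)
  assume n: "\<not> (\<exists>f\<in>E. tgt f = v \<and> f \<noteq> e)"
  have "{e\<in>E. tgt e = v} = {e}"
  proof
    show "{e\<in>E. tgt e = v} \<subseteq> {e}" using n by blast
    show "{e} \<subseteq> {e\<in>E. tgt e = v}" using e by blast
  qed
  then have "indeg V E src tgt v = 1" by (simp add: indeg_def)
  then show False using v by (simp add: collecting_def)
qed

lemma other_out:
  assumes v: "dist v" and e: "e \<in> E" "src e = v"
  shows "\<exists>f\<in>E. src f = v \<and> f \<noteq> e"
proof (rule ccontr)
  assume n: "\<not> (\<exists>f\<in>E. src f = v \<and> f \<noteq> e)"
  have "{e\<in>E. src e = v} = {e}"
  proof
    show "{e\<in>E. src e = v} \<subseteq> {e}" using n by blast
    show "{e} \<subseteq> {e\<in>E. src e = v}" using e by blast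
  qed
  then have "outdeg V E src tgt v = 1" by (simp add: outdeg_def)
  then show False using v by (simp add: distributing_def)
qed

lemma ax2: "\<forall>v\<in>V. dist v \<longrightarrow>
        (\<forall>e1\<in>E. \<forall>e2\<in>E. src e1 = v \<and> src e2 = v \<and> e1 \<noteq> e2 \<longrightarrow>
           F e1 \<noteq> [] \<and> F e2 \<noteq> [] \<and> hd (F e1) \<noteq> hd (F e2))"
  using rs unfolding rauzy_scheme_def by (elim conjE) assumption
lemma ax2b: "\<forall>v\<in>V. coll v \<longrightarrow>
        (\<forall>e1\<in>E. \<forall>e2\<in>E. tgt e1 = v \<and> tgt e2 = v \<and> e1 \<noteq> e2 \<longrightarrow>
           B e1 \<noteq> [] \<and> B e2 \<noteq> [] \<and> last (B e1) \<noteq> last (B e2))"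
  using rs unfolding rauzy_scheme_def by (elim conjE) assumption

lemma B_ne: "e \<in> E \<Longrightarrow> coll (tgt e) \<Longrightarrow> B e \<noteq> []"
proof -
  assume a: "e \<in> E" "coll (tgt e)"
  obtain f where "f \<in> E" "tgt f = tgt e" "f \<noteq> e" using other_in[OF a(2) a(1)] by blast
  then show ?thesis using ax2b a inV by blast
qed

lemma F_ne: "e \<in> E \<Longrightarrow> dist (src e) \<Longrightarrow> F e \<noteq> []"
proof -
  assume a: "e \<in> E" "dist (src e)"
  obtain f where "f \<in> E" "src f = src e" "f \<noteq> e" using other_out[OF a(2) a(1)] by blast
  then show ?thesis using ax2 a inV by blast
qed

lemma F_hd_ne: "e \<in> E \<Longrightarrow> f \<in> E \<Longrightarrow> dist (src e) \<Longrightarrow> src f = src e \<Longrightarrow> e \<noteq> f \<Longrightarrow> hd (F e) \<noteq> hd (F f)"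
  using ax2 inV by blast

abbreviation "supp e \<equiv> support_edge V E src tgt e"

lemma sup_sym: "supp e \<Longrightarrow> spath [e]"
  by (simp add: support_edge_def symmetric_path_def is_path_def)

lemma sup_FB: "supp e \<Longrightarrow> F e = B e"
proof -
  assume a: "supp e"
  have "Fp [e] = Bp [e]" using ax3 sup_sym[OF a] by blast
  then show ?thesis by (simp add: Fp_eq Bp_eq)
qed

lemma eqF: "\<lbrakk>spath s1; spath s2\<rbrakk> \<Longrightarrow> Fp s1 = Bp s1"
  using ax3 by blast

lemma lemA:
  assumes t: "spath t" and i: "i < length t" and ti: "t ! i = e" and e: "supp e"
  shows "Fp (take (Suc i) t) = Bc (take i t) @ F e"
    and "Fp t = Bc (take i t) @ F e @ Frest (drop (Suc i) t)"
    and "Fp (drop i t) = F e @ Frest (drop (Suc i) t)"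
proof -
  have dr: "drop i t = e # drop (Suc i) t" using i ti by (metis Cons_nth_drop_Suc)
  have ce: "\<not> dist (src e)" using e coll_not_dist by (simp add: support_edge_def)
  show c: "Fp (drop i t) = F e @ Frest (drop (Suc i) t)" by (simp add: dr Fp_eq)
  have "Fp (take (Suc i) t) = Bc (take i t) @ F e \<and> Fp t = Bc (take i t) @ F e @ Frest (drop (Suc i) t)"
  proof (cases i)
    case 0
    then have "t = e # drop (Suc 0) t" using dr by simp
    then obtain r where tr: "t = e # r" by blast
    show ?thesis using 0 by (simp add: tr Fp_eq)
  next
    case (Suc j)
    have tk: "take (Suc i) t = take i t @ [e]" using i ti by (simp add: take_Suc_conv_app_nth)
    have ne: "take i t \<noteq> []" using Suc i by (cases t) auto
    have sp: "spath (take (Suc i) t)" using sym_take[OF t i] ti e by (simp add: support_edge_def)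
    have "Fp (take (Suc i) t) = Bp (take (Suc i) t)" using eqF[OF sp sp] .
    also have "\<dots> = Bc (take i t) @ F e" using tk sup_FB[OF e] by (simp add: Bp_eq)
    finally have 1: "Fp (take (Suc i) t) = Bc (take i t) @ F e" .
    have tt: "t = take i t @ e # drop (Suc i) t" using dr by (metis append_take_drop_id)
    have "Fp t = F (hd (take i t)) @ Frest (tl (take i t)) @ Frest (drop (Suc i) t)"
      using ne ce by (subst tt, simp add: Fp_eq)
    moreover have "Fp (take (Suc i) t) = F (hd (take i t)) @ Frest (tl (take i t))"
      using ne ce tk by (simp add: Fp_eq)
    ultimately show ?thesis using 1 by simp
  qed
  then show "Fp (take (Suc i) t) = Bc (take i t) @ F e" "Fp t = Bc (take i t) @ F e @ Frest (drop (Suc i) t)"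
    by auto
qed

lemma Bc_take_mono: "i \<le> j \<Longrightarrow> length (Bc (take i t)) \<le> length (Bc (take j t))"
proof -
  assume "i \<le> j"
  then have "take j t = take i t @ take (j - i) (drop i t)"
    by (metis le_add_diff_inverse take_add)
  then show ?thesis by (metis Bc_simps(2) length_append le_add1)
qed

lemma phi_mono:
  assumes t: "spath t" and ii: "i < i'" "i' < length t" and ti: "t ! i' = e" and e: "supp e"
  shows "length (Bc (take i t)) < length (Bc (take i' t))"
proof -
  obtain k where k: "i' = Suc k" using ii by (cases i') auto
  have tk: "take i' t = take k t @ [t ! k]" using k ii by (simp add: take_Suc_conv_app_nth)
  have pt: "is_path E src tgt t" using t by (simp add: symmetric_path_def)
  have "tgt (t ! k) = src e" using path_link[OF pt] k ii ti by auto
  then have c: "coll (tgt (t ! k))" using e by (simp add: support_edge_def)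
  have "t ! k \<in> E" using path_nth[OF pt] k ii by auto
  then have "B (t ! k) \<noteq> []" using B_ne c by blast
  then have "length (Bc (take k t)) < length (Bc (take i' t))" using tk c by simp
  moreover have "length (Bc (take i t)) \<le> length (Bc (take k t))" using k ii Bc_take_mono by simp
  ultimately show ?thesis by simp
qed

lemma exists_supp: "\<exists>e. supp e"
proof -
  have "factor_of_inf [] W" by (simp add: factor_of_inf_def)
  then obtain s where s: "spath s" using ax6 by blast
  then have ps: "is_path E src tgt s" and c0: "coll (src (hd s))" and dl: "dist (tgt (last s))"
    by (auto simp: symmetric_path_def)
  have ne: "s \<noteq> []" using ps by (simp add: is_path_def)
  have ex: "\<exists>k. k < length s \<and> dist (tgt (s ! k))" using ne dl by (metis last_conv_nth diff_less length_greater_0_conv zero_less_one)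
  define k where "k = (LEAST k. k < length s \<and> dist (tgt (s ! k)))"
  have k: "k < length s" "dist (tgt (s ! k))" using LeastI_ex[OF ex] by (auto simp: k_def)
  have km: "\<And>k'. k' < k \<Longrightarrow> \<not> dist (tgt (s ! k'))" using not_less_Least k_def k by fastforce
  have "coll (src (s ! k))"
  proof (cases k)
    case 0 then show ?thesis using c0 ne by (simp add: hd_conv_nth)
  next
    case (Suc k')
    have "tgt (s ! k') = src (s ! k)" using path_link[OF ps] Suc k by auto
    moreover have "s ! k' \<in> E" using path_nth[OF ps] Suc k by auto
    moreover have "\<not> dist (tgt (s ! k'))" using km[of k'] Suc by simp
    ultimately show ?thesis using inV DC by metis
  qed
  then have "supp (s ! k)" using k path_nth[OF ps] by (simp add: support_edge_def)
  then show ?thesis by blast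
qed

lemma main:
  assumes per: "periodic_with W N" and e: "supp e" and big: "N \<le> length (F e)"
  shows False
proof -
  define x where "x = F e"
  have N: "0 < N" using per by (simp add: periodic_with_def)
  have eE: "e \<in> E" and ce: "coll (src e)" and de: "dist (tgt e)" using e by (auto simp: support_edge_def)
  obtain j where xj0: "x = map W [j..<j + length x]"
    using ax5[OF eE] unfolding factor_of_inf_def x_def by blast
  obtain nx where nx: "nx = length x" by blast
  have xj: "x = map W [j..<j + nx]" using xj0 nx by metis
  from ax7 obtain uf where uf: "\<And>f. f \<in> E \<Longrightarrow> factor_of_inf (uf f) W \<and>
      (\<forall>s. spath s \<and> sublist (uf f) (Fp s) \<longrightarrow> f \<in> set s)"
    by metis
  define M where "M = (\<Sum>f\<in>E. length (uf f))"
  define L where "L = N + M + length x + 1"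
  define U where "U = map W [j..<j + L]"
  have lenU: "length U = L" by (simp add: U_def)
  have Unth: "\<And>k. k < L \<Longrightarrow> U ! k = W (j + k)" by (simp add: U_def)
  have xnth: "\<And>k. k < length x \<Longrightarrow> x ! k = W (j + k)"
  proof -
    fix k assume k: "k < length x"
    have "x ! k = map W [j..<j + nx] ! k" using xj by (rule arg_cong)
    then show "x ! k = W (j + k)" using k nx by simp
  qed
  have xU: "take (length x) U = x"
    by (rule nth_equalityI) (auto simp: lenU L_def Unth xnth)
  have ufU: "\<And>f. f \<in> E \<Longrightarrow> sublist (uf f) U"
  proof -
    fix f assume f: "f \<in> E"
    have "length (uf f) \<le> M" unfolding M_def using f finE by (intro member_le_sum) auto
    then have "length (uf f) + N \<le> L" unfolding L_def by simp
    then show "sublist (uf f) U" unfolding U_def using fac_in_window[OF per] uf[OF f] by blast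
  qed
  have "factor_of_inf U W" unfolding factor_of_inf_def lenU unfolding U_def by blast
  then have "\<exists>s. spath s \<and> sublist U (Fp s)" by (rule ax6)
  then obtain t where t: "spath t" "sublist U (Fp t)"
    and tmin: "\<And>t'. spath t' \<Longrightarrow> sublist U (Fp t') \<Longrightarrow> length t \<le> length t'"
    using ex_has_least_nat[where m=length and P="\<lambda>s. spath s \<and> sublist U (Fp s)"] by blast
  have pt: "is_path E src tgt t" using t by (simp add: symmetric_path_def)
  obtain P0 R where FP: "Fp t = P0 @ U @ R" using t(2) by (auto simp: sublist_def)
  define phi where "phi i = length (Bc (take i t))" for i
  define Oc where "Oc = {k. k + length x \<le> length (Fp t) \<and> take (length x) (drop k (Fp t)) = x}"
  define Pa where "Pa = {i. i + length [e] \<le> length t \<and> take (length [e]) (drop i t) = [e]}"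
  have Pa_iff: "\<And>i. i \<in> Pa \<longleftrightarrow> i < length t \<and> t ! i = e"
    unfolding Pa_def by (auto simp: take_Suc_conv_app_nth hd_drop_conv_nth)
  have finOc: "finite Oc" unfolding Oc_def by (rule finite_subset[of _ "{..length (Fp t)}"]) auto
  have imgsub: "phi ` Pa \<subseteq> Oc"
  proof
    fix k assume "k \<in> phi ` Pa"
    then obtain i where i: "i < length t" "t ! i = e" "k = phi i" using Pa_iff by auto
    have "Fp t = Bc (take i t) @ x @ Frest (drop (Suc i) t)" using lemA(2)[OF t(1) i(1,2) e] x_def by simp
    then show "k \<in> Oc" unfolding Oc_def phi_def using i(3) by (simp add: phi_def)
  qed
  have injphi: "inj_on phi Pa"
  proof (rule inj_onI)
    fix a b assume ab: "a \<in> Pa" "b \<in> Pa" "phi a = phi b"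
    show "a = b"
    proof (rule ccontr)
      assume "a \<noteq> b"
      then have "a < b \<or> b < a" by arith
      then show False using ab Pa_iff phi_mono[OF t(1) _ _ _ e] unfolding phi_def
        by (metis less_irrefl)
    qed
  qed
  have SOc: "length P0 \<in> Oc" unfolding Oc_def using FP xU lenU L_def by simp
  have "card Oc \<ge> 1" using SOc finOc by (metis One_nat_def Suc_leI card_gt_0_iff empty_iff)
  moreover have "occurs_k (Fp [e]) (card Oc) (Fp t)"
    using x_def by (simp add: occurs_k_def occ_def Oc_def Fp_eq)
  ultimately have "occurs_k [e] (card Oc) t"
    using ax4[OF sup_sym[OF e] t(1)] by blast
  then have "card Oc \<le> card Pa" by (simp add: occurs_k_def occ_def Pa_def)
  also have "\<dots> = card (phi ` Pa)" using injphi by (simp add: card_image)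
  finally have "phi ` Pa = Oc" using imgsub finOc
    by (metis card_mono card_subset_eq le_antisym)
  then obtain i0 where i0: "i0 < length t" "t ! i0 = e" "phi i0 = length P0" using SOc Pa_iff by force
  have "i0 = 0"
  proof (rule ccontr)
    assume nz: "i0 \<noteq> 0"
    have sd: "spath (drop i0 t)" using sym_drop[OF t(1) i0(1)] i0(2) ce by simp
    have "Fp t = Bc (take i0 t) @ Fp (drop i0 t)" using lemA(2,3)[OF t(1) i0(1,2) e] by simp
    then have "Fp (drop i0 t) = U @ R" using FP i0(3) unfolding phi_def by simp
    then have "sublist U (Fp (drop i0 t))" by simp
    then have "length t \<le> length (drop i0 t)" using tmin sd by blast
    then show False using nz i0(1) by simp
  qed
  then have t0: "t ! 0 = e" and P0: "P0 = []" using i0 by (auto simp: phi_def)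
  have l0: "0 < length t" using i0(1) by linarith
  have Ft0: "Fp t = x @ Frest (drop 1 t)" using lemA(2)[OF t(1) l0 t0 e] x_def by simp
  have lt: "1 < length t"
  proof (rule ccontr)
    assume "\<not> 1 < length t"
    then have "drop 1 t = []" by simp
    then have "length (Fp t) = length x" using Ft0 by simp
    then show False using FP lenU L_def by simp
  qed
  define g where "g = t ! 1"
  have gE: "g \<in> E" using path_nth[OF pt lt] g_def by simp
  have sg: "src g = tgt e" using path_link[OF pt, of 0] lt t0 g_def by simp
  have d1: "drop 1 t = g # drop 2 t" using lt g_def by (metis Cons_nth_drop_Suc one_add_one plus_1_eq_Suc)
  have Fg: "F g \<noteq> []" using F_ne gE sg de by simp
  have "Fp t = x @ F g @ Frest (drop 2 t)" using Ft0 d1 sg de by simp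
  then have "Fp t ! length x = hd (F g)" using Fg by (simp add: nth_append hd_conv_nth)
  moreover have "Fp t ! length x = U ! length x" using FP P0 lenU L_def by (simp add: nth_append)
  ultimately have hg: "hd (F g) = W (j + length x)" using Unth L_def by simp
  obtain e' where e': "e' \<in> E" "src e' = tgt e" "e' \<noteq> g" using other_out[OF de gE sg] by blast
  have "sublist (uf e') (Fp t)" using ufU[OF e'(1)] t(2) by (meson sublist_order.order.trans)
  then have "e' \<in> set t" using uf[OF e'(1)] t(1) by blast
  then obtain m where m: "m < length t" "t ! m = e'" by (metis in_set_conv_nth)
  have "m \<noteq> 0"
  proof
    assume "m = 0"
    then have "e' = e" using m t0 by simp
    then show False using e'(2) ce de coll_not_dist by metis
  qed
  moreover have "m \<noteq> 1" using m e'(3) g_def by auto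
  ultimately obtain i' where mi: "m = Suc i'" "0 < i'" by (metis One_nat_def gr0I not0_implies_Suc)
  have ti'E: "t ! i' \<in> E" using path_nth[OF pt] mi m by simp
  have "tgt (t ! i') = tgt e" using path_link[OF pt, of i'] mi m e' by simp
  then have ti': "t ! i' = e" using indeg_unique[OF _ de ti'E eE] inV eE by blast
  have i'l: "i' < length t" using mi m by simp
  have stk: "spath (take m t)" using sym_take[OF t(1) i'l] ti' de mi by simp
  have Ftk: "Fp (take m t) = Bc (take i' t) @ x" using lemA(1)[OF t(1) i'l ti' e] mi x_def by simp
  have Ft': "Fp t = Bc (take i' t) @ x @ Frest (drop m t)" using lemA(2)[OF t(1) i'l ti' e] mi x_def by simp
  define P where "P = phi i' + length x"
  have PL: "P < L"
  proof (rule ccontr)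
    assume "\<not> P < L"
    then have "L \<le> length (Fp (take m t))" using Ftk unfolding P_def phi_def by simp
    moreover have "Fp t = Fp (take m t) @ Frest (drop m t)" using Ftk Ft' by simp
    ultimately have "take L (Fp t) = take L (Fp (take m t))" by simp
    moreover have "take L (Fp t) = U" using FP P0 lenU by simp
    ultimately have "prefix U (Fp (take m t))" by (metis take_is_prefix)
    then have "sublist U (Fp (take m t))" by (rule prefix_imp_sublist)
    then have "length t \<le> length (take m t)" using tmin stk by blast
    then show False using m(1) by simp
  qed
  have dm: "drop m t = e' # drop (Suc m) t" using m by (metis Cons_nth_drop_Suc)
  have Fe': "F e' \<noteq> []" using F_ne e' de by simp
  have "Fp t = Bc (take i' t) @ x @ F e' @ Frest (drop (Suc m) t)" using Ft' dm e' de by simp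
  then have A1: "Fp t ! P = hd (F e')" and A2: "Fp t ! (P - N) = x ! (length x - N)"
    using Fe' big x_def N unfolding P_def phi_def by (auto simp: nth_append hd_conv_nth)
  have "Fp t ! P = W (j + P)" and "Fp t ! (P - N) = W (j + (P - N))"
    using FP P0 PL Unth lenU by (auto simp: nth_append)
  moreover have "W (j + P) = W (j + (P - N))"
    using per_mult[OF per, of "j + (P - N)" 1] big x_def unfolding P_def by simp
  moreover have "x ! (length x - N) = W (j + (length x - N))" using xnth N big x_def by simp
  moreover have "W (j + length x) = W (j + (length x - N))"
    using per_mult[OF per, of "j + (length x - N)" 1] big x_def by simp
  ultimately have "hd (F e') = hd (F g)" using A1 A2 hg by simp
  then show False using F_hd_ne[OF gE e'(1)] sg e' de by simp
qed

end

theorem corollary6p9: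
  fixes W :: "nat \<Rightarrow> 'a" and N :: nat
    and V :: "'v set" and E :: "'e set" and src tgt :: "'e \<Rightarrow> 'v"
    and F B :: "'e \<Rightarrow> 'a list"
  assumes "periodic_with W N"
    and "rauzy_scheme W V E src tgt F B"
  shows "scale V E src tgt F < N"
proof (rule ccontr)
  assume nlt: "\<not> scale V E src tgt F < N"
  interpret rsch W V E src tgt F B by unfold_locales (rule assms(2))
  obtain e where e: "support_edge V E src tgt e" using exists_supp by blast
  have "{length (F e) | e. support_edge V E src tgt e} \<subseteq> (\<lambda>e. length (F e)) ` E"
    by (auto simp: support_edge_def)
  then have fin: "finite {length (F e) | e. support_edge V E src tgt e}"
    using finE by (meson finite_imageI finite_subset)
  have "scale V E src tgt F \<le> length (F e)"
    unfolding scale_def using fin e by (intro Min_le) auto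
  then have "N \<le> length (F e)" using nlt by simp
  then show False using main[OF assms(1) e] by blast
qed

end
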